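(* Let $n\ge2$ be an integer, $l_k=\pi k/n$, $S_n=\sum_{k=1}^{n-1}\csc l_k$, $c_k=\cos\frac{\pi(2k-1)}{2n}$, $\sigma_k(\phi)=(1-c_k^2\cos^2\phi)^{1/2}$, $V(\phi)=\frac{S_n}{4\cos\phi}+\frac14\sum_{k=1}^n\frac{1}{\sigma_k(\phi)}$ and $W(\phi)=\cos\phi\,V(\phi)=\frac{S_n}{4}+\frac{\cos\phi}{4}\sum_{k=1}^n\frac1{\sigma_k(\phi)}$. Then (i) $W'(\phi)/W(\phi)\le0$ for all $\phi\in[0,\pi/2)$; (ii) if $n\ge10$, then $W(\pi/2)=S_n/4$ and $\left|W'(\phi)/W(\phi)\right|\le\frac45$ for all $\phi\in[\pi/4,\pi/2)$.
   Context: $V$ is the shape potential of the spatial double-polygon problem in Devaney-type coordinates; $W(\pi/2)$ denotes the value of the expression for $W$ at $\phi=\pi/2$. *)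

theory Defs
  imports "HOL-Analysis.Analysis"
begin

definition S_n :: "nat \<Rightarrow> real" where
  "S_n n = (\<Sum>k=1..n-1. 1 / sin (pi * real k / real n))"

definition c_k :: "nat \<Rightarrow> nat \<Rightarrow> real" where
  "c_k n k = cos (pi * (2 * real k - 1) / (2 * real n))"

definition sigma_k :: "nat \<Rightarrow> nat \<Rightarrow> real \<Rightarrow> real" where
  "sigma_k n k \<phi> = sqrt (1 - (c_k n k)\<^sup>2 * (cos \<phi>)\<^sup>2)"

definition V_pot :: "nat \<Rightarrow> real \<Rightarrow> real" where
  "V_pot n \<phi> = S_n n / (4 * cos \<phi>) + (1/4) * (\<Sum>k=1..n. 1 / sigma_k n k \<phi>)"

definition W_fun :: "nat \<Rightarrow> real \<Rightarrow> real" where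
  "W_fun n \<phi> = S_n n / 4 + (cos \<phi> / 4) * (\<Sum>k=1..n. 1 / sigma_k n k \<phi>)"

end

theory Submission
  imports Defs
begin

lemma ck_sq_lt:
  assumes "1 \<le> k" "k \<le> n"
  shows "(c_k n k)\<^sup>2 < 1"
proof -
  define th where "th = pi * (2 * real k - 1) / (2 * real n)"
  have n0: "real n > 0" using assms by simp
  have "0 < th" unfolding th_def using assms n0 by (simp add: field_simps)
  moreover have "th < pi"
  proof -
    have "(2 * real k - 1) / (2 * real n) < 1" using assms n0 by (simp add: field_simps)
    thus ?thesis unfolding th_def using pi_gt_zero
      by (metis mult.right_neutral mult_strict_left_mono times_divide_eq_right)
  qed
  ultimately have "sin th > 0" by (rule sin_gt_zero)
  hence "(sin th)\<^sup>2 > 0" by simp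
  moreover have "(sin th)\<^sup>2 + (cos th)\<^sup>2 = 1" by simp
  ultimately show ?thesis unfolding c_k_def th_def[symmetric] by linarith
qed

lemma rad_pos:
  fixes c :: real assumes "c\<^sup>2 < 1"
  shows "1 - c\<^sup>2 * (cos x)\<^sup>2 > 0" "1 - c\<^sup>2 * (cos x)\<^sup>2 \<le> 1"
proof -
  have cc: "(cos x)\<^sup>2 \<le> 1" by (simp add: abs_square_le_1)
  have "c\<^sup>2 * (cos x)\<^sup>2 \<le> c\<^sup>2" using cc by (simp add: mult_left_le)
  thus "1 - c\<^sup>2 * (cos x)\<^sup>2 > 0" using assms by linarith
  show "1 - c\<^sup>2 * (cos x)\<^sup>2 \<le> 1" by simp
qed

lemma sigma_pos:
  assumes "1 \<le> k" "k \<le> n"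
  shows "sigma_k n k x > 0" "sigma_k n k x \<le> 1"
  using rad_pos[OF ck_sq_lt[OF assms]] unfolding sigma_k_def by auto

lemma term_deriv:
  fixes c :: real
  assumes "c\<^sup>2 < 1"
  shows "((\<lambda>x. cos x / sqrt (1 - c\<^sup>2 * (cos x)\<^sup>2)) has_real_derivative
          (- sin x / (sqrt (1 - c\<^sup>2 * (cos x)\<^sup>2))^3)) (at x)"
proof -
  define a where "a = 1 - c\<^sup>2 * (cos x)\<^sup>2"
  have a: "a > 0" using rad_pos assms unfolding a_def by blast
  have d1: "((\<lambda>x. 1 - c\<^sup>2 * (cos x)\<^sup>2) has_real_derivative (c\<^sup>2 * (2 * cos x * sin x))) (at x)"
    by (rule derivative_eq_intros refl)+ (simp add: power2_eq_square)
  have d2: "((\<lambda>x. sqrt (1 - c\<^sup>2 * (cos x)\<^sup>2)) has_real_derivative (c\<^sup>2 * (2 * cos x * sin x)) / (2 * sqrt a)) (at x)"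
    using DERIV_chain2[OF DERIV_real_sqrt[OF a[unfolded a_def]] d1] unfolding a_def
    by (rule DERIV_cong) (simp add: field_simps)
  have d3: "((\<lambda>x. cos x / sqrt (1 - c\<^sup>2 * (cos x)\<^sup>2)) has_real_derivative
      ((- sin x) * sqrt a - cos x * ((c\<^sup>2 * (2 * cos x * sin x)) / (2 * sqrt a))) / (sqrt a * sqrt a)) (at x)"
    using DERIV_divide[OF DERIV_cos d2] a unfolding a_def by simp
  have sa: "sqrt a > 0" using a by simp
  have sq: "sqrt a * sqrt a = a" using a by simp
  have "((- sin x) * sqrt a - cos x * ((c\<^sup>2 * (2 * cos x * sin x)) / (2 * sqrt a))) / (sqrt a * sqrt a)
      = - sin x * (a + c\<^sup>2 * (cos x)\<^sup>2) / (sqrt a)^3"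
    using sa sq by (simp add: field_simps power2_eq_square power3_eq_cube)
  also have "\<dots> = - sin x / (sqrt a)^3" unfolding a_def by simp
  finally show ?thesis using d3 unfolding a_def by simp
qed

lemma W_alt: "W_fun n = (\<lambda>x. S_n n / 4 + (1/4) * (\<Sum>k=1..n. cos x / sigma_k n k x))"
  unfolding W_fun_def by (rule ext) (simp add: sum_divide_distrib sum_distrib_left)

lemma W_deriv:
  "deriv (W_fun n) x = - (sin x / 4) * (\<Sum>k=1..n. 1 / (sigma_k n k x)^3)"
proof -
  have "((\<lambda>x. S_n n / 4 + (1/4) * (\<Sum>k=1..n. cos x / sigma_k n k x)) has_real_derivative
       0 + (1/4) * (\<Sum>k=1..n. - sin x / (sigma_k n k x)^3)) (at x)"
  proof -
    have "((\<lambda>x. \<Sum>k=1..n. cos x / sigma_k n k x) has_real_derivative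
       (\<Sum>k=1..n. - sin x / (sigma_k n k x)^3)) (at x)"
    proof (rule DERIV_sum)
      fix k assume "k \<in> {1..n}"
      hence "(c_k n k)\<^sup>2 < 1" using ck_sq_lt by auto
      from term_deriv[OF this, of x]
      show "((\<lambda>x. cos x / sigma_k n k x) has_real_derivative - sin x / (sigma_k n k x)^3) (at x)"
        unfolding sigma_k_def by simp
    qed
    from DERIV_add[OF DERIV_const DERIV_cmult[OF this, of "1/4"]]
    show ?thesis by simp
  qed
  hence "deriv (W_fun n) x = 0 + (1/4) * (\<Sum>k=1..n. - sin x / (sigma_k n k x)^3)"
    unfolding W_alt by (rule DERIV_imp_deriv)
  also have "\<dots> = - (sin x / 4) * (\<Sum>k=1..n. 1 / (sigma_k n k x)^3)"
    by (simp add: sum_distrib_left sum_negf)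
  finally show ?thesis .
qed

lemma telesc: "(\<Sum>k=1..m. 2 * sin x * cos ((2 * real k - 1) * x)) = sin (2 * real m * x)"
proof (induction m)
  case 0 then show ?case by simp
next
  case (Suc m)
  have "sin (2 * real m * x) + 2 * sin x * cos ((2 * real (Suc m) - 1) * x) = sin (2 * real (Suc m) * x)"
  proof -
    define z where "z = 2 * real m * x + x"
    have e1: "(2 * real (Suc m) - 1) * x = z" unfolding z_def by (simp add: algebra_simps)
    have e2: "2 * real (Suc m) * x = z + x" unfolding z_def by (simp add: algebra_simps)
    have e3: "2 * real m * x = z - x" unfolding z_def by simp
    show ?thesis unfolding e1 e2 e3
      by (simp add: sin_add sin_diff algebra_simps)
  qed
  then show ?case using Suc by simp
qed

lemma sum_ck_sq:
  assumes "n \<ge> 2"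
  shows "(\<Sum>k=1..n. (c_k n k)\<^sup>2) = real n / 2"
proof -
  define x where "x = pi / real n"
  have n0: "real n > 0" using assms by simp
  have "0 < x" "x < pi" unfolding x_def using assms n0 by (auto simp: field_simps)
  hence sx: "sin x > 0" by (rule sin_gt_zero)
  have "2 * sin x * (\<Sum>k=1..n. cos ((2 * real k - 1) * x)) = sin (2 * real n * x)"
    using telesc[of x n] by (simp add: sum_distrib_left mult.assoc)
  also have "\<dots> = 0" unfolding x_def using n0 by simp
  finally have z: "(\<Sum>k=1..n. cos ((2 * real k - 1) * x)) = 0" using sx by simp
  have cf: "\<And>k. (c_k n k)\<^sup>2 = (1 + cos ((2 * real k - 1) * x)) / 2"
  proof -
    fix k
    have "(2 * real k - 1) * x = 2 * (pi * (2 * real k - 1) / (2 * real n))"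
      unfolding x_def using n0 by (simp add: field_simps)
    hence "cos ((2 * real k - 1) * x) = cos (2 * (pi * (2 * real k - 1) / (2 * real n)))"
      by simp
    thus "(c_k n k)\<^sup>2 = (1 + cos ((2 * real k - 1) * x)) / 2"
      unfolding c_k_def cos_double_cos by simp
  qed
  hence "(\<Sum>k=1..n. (c_k n k)\<^sup>2) = (\<Sum>k=1..n. (1 + cos ((2 * real k - 1) * x)) / 2)"
    by (intro sum.cong refl) (rule cf)
  also have "\<dots> = (real n + (\<Sum>k=1..n. cos ((2 * real k - 1) * x))) / 2"
    by (simp add: sum_divide_distrib[symmetric] sum.distrib)
  finally show ?thesis using z by simp
qed

lemma cube_bound:
  fixes t s :: real
  assumes "0 \<le> t" "t \<le> 1/2" "s \<ge> 0" "s\<^sup>2 = 1 - t"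
  shows "1 / s^3 \<le> 1 + 4 * t"
proof -
  have s1: "s \<le> 1" by (rule power2_le_imp_le) (use assms in auto)
  have st: "s \<ge> 1 - t"
  proof -
    have "(1 - t) * (1 - t) \<le> 1 * (1 - t)" by (rule mult_right_mono) (use assms in auto)
    hence "(1 - t)\<^sup>2 \<le> s\<^sup>2" using assms by (simp add: power2_eq_square)
    thus ?thesis by (rule power2_le_imp_le) (use assms in auto)
  qed
  have p: "5 - 14 * t + 8 * t\<^sup>2 \<ge> 0"
  proof -
    have "5 - 14 * t + 8 * t\<^sup>2 = (1 - 2 * t) * (5 - 4 * t)" by (simp add: algebra_simps power2_eq_square)
    also have "\<dots> \<ge> 0" using assms by (intro mult_nonneg_nonneg) auto
    finally show ?thesis .
  qed
  have "s * (3 - 4 * t) \<ge> (1 - t) * (3 - 4 * t)" by (rule mult_right_mono) (use st assms in auto)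
  moreover have "4 * (1 - t)\<^sup>2 - 2 + t + (1 - t) * (3 - 4 * t) = 5 - 14 * t + 8 * t\<^sup>2"
    by (simp add: algebra_simps power2_eq_square)
  ultimately have r: "4 * (1 - t)\<^sup>2 - 2 + t + s * (3 - 4 * t) \<ge> 0" using p by linarith
  have s4: "s^4 = (1 - t)\<^sup>2" 
  proof -
    have "s^4 = s\<^sup>2 * s\<^sup>2" by (simp add: power2_eq_square power4_eq_xxxx)
    thus ?thesis using assms(4) by (simp add: power2_eq_square)
  qed
  have s3: "s^3 = s * (1 - t)" using assms(4) by (simp add: power2_eq_square power3_eq_cube)
  have q: "4 * s^4 + 4 * s^3 - s\<^sup>2 - s - 1 \<ge> 0"
    using r unfolding s4 s3 assms(4) by (simp add: algebra_simps)
  have tt: "t = 1 - s\<^sup>2" using assms by simp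
  have "s^3 * (1 + 4 * t) - 1 = (1 - s) * (4 * s^4 + 4 * s^3 - s\<^sup>2 - s - 1)"
    unfolding tt by (simp add: algebra_simps power2_eq_square power3_eq_cube power4_eq_xxxx)
  also have "\<dots> \<ge> 0" using q s1 by (intro mult_nonneg_nonneg) auto
  finally have m: "s^3 * (1 + 4 * t) \<ge> 1" by simp
  have "s > 0" using assms s1 st by linarith
  with m show ?thesis by (simp add: divide_le_eq mult.commute)
qed

lemma poly_bound:
  fixes u s :: real
  assumes "u \<ge> 0" "u\<^sup>2 \<le> 1/2" "s \<ge> 0" "s\<^sup>2 = 1 - u\<^sup>2"
  shows "s * (1 + 2 * u\<^sup>2) \<le> 1 + 4/5 * u"
proof -
  have key: "8/5 - 59/25 * u + 4 * u^5 \<ge> 0"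
  proof (cases "u \<le> 1/2")
    case True
    have "u^5 \<ge> 0" using assms by simp
    then show ?thesis using True by linarith
  next
    case False
    have "u\<^sup>2 \<le> (71/100)\<^sup>2" using assms(2) by (simp add: power2_eq_square)
    hence u1: "u \<le> 71/100" by (rule power2_le_imp_le) simp
    have "(1/2::real)^5 \<le> u^5" by (rule power_mono) (use False in auto)
    hence "1/32 \<le> u^5" by (simp add: power_divide)
    then show ?thesis using u1 by linarith
  qed
  have "(s * (1 + 2 * u\<^sup>2))\<^sup>2 = (1 - u\<^sup>2) * (1 + 2 * u\<^sup>2)\<^sup>2"
    by (simp add: power_mult_distrib assms(4))
  also have "\<dots> = (1 + 4/5 * u)\<^sup>2 - u * (8/5 - 59/25 * u + 4 * u^5)"
    by (simp add: algebra_simps power2_eq_square power3_eq_cube power4_eq_xxxx)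
       (simp add: eval_nat_numeral algebra_simps)
  also have "\<dots> \<le> (1 + 4/5 * u)\<^sup>2" using key assms(1) by simp
  finally show ?thesis by (rule power2_le_imp_le) (use assms in auto)
qed
lemma csc_pos:
  assumes "1 \<le> k" "k < n"
  shows "sin (pi * real k / real n) > 0"
proof -
  have n0: "real n > 0" using assms by simp
  have "real k / real n < 1" using assms n0 by simp
  hence "pi * real k / real n < pi" using pi_gt_zero
    by (metis mult.right_neutral mult_strict_left_mono times_divide_eq_right)
  moreover have "0 < pi * real k / real n" using assms n0 by simp
  ultimately show ?thesis by (intro sin_gt_zero)
qed

lemma S_nonneg: "S_n n \<ge> 0"
  unfolding S_n_def
proof (rule sum_nonneg)
  fix k assume "k \<in> {1..n-1}"
  hence "1 \<le> k" "k < n" by auto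
  thus "0 \<le> 1 / sin (pi * real k / real n)" using csc_pos by (simp add: less_imp_le)
qed

lemma S_lower:
  assumes "n \<ge> 10"
  shows "S_n n \<ge> 5/4 * real n"
proof -
  define f where "f k = 1 / sin (pi * real k / real n)" for k
  have n0: "real n > 0" using assms by simp
  have pos: "f k \<ge> 0" if "k \<in> {1..n-1}" for k
  proof -
    have "1 \<le> k" "k < n" using that by auto
    thus ?thesis using csc_pos[of k n] unfolding f_def by (simp add: less_imp_le)
  qed
  have sym: "f (n - j) = f j" if "j \<le> n" for j
  proof -
    have "pi * real (n - j) / real n = pi - pi * real j / real n"
      using that n0 by (simp add: of_nat_diff field_simps)
    thus ?thesis unfolding f_def by simp
  qed
  have low: "f j \<ge> real n / (pi * real j)" if "1 \<le> j" "j < n" for j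
  proof -
    have sp: "sin (pi * real j / real n) > 0" using csc_pos that by blast
    have "sin (pi * real j / real n) \<le> pi * real j / real n"
      by (rule sin_x_le_x) (use n0 in simp)
    hence "1 / (pi * real j / real n) \<le> 1 / sin (pi * real j / real n)"
      using sp that n0 by (intro divide_left_mono) auto
    thus ?thesis unfolding f_def by simp
  qed
  define A where "A = {1..4::nat}"
  have A: "A \<subseteq> {1..n-1}" "(\<lambda>j. n - j) ` A \<subseteq> {1..n-1}" "A \<inter> (\<lambda>j. n - j) ` A = {}"
    "inj_on (\<lambda>j. n - j) A"
    using assms unfolding A_def by (auto simp: inj_on_def)
  have "S_n n = sum f {1..n-1}" unfolding S_n_def f_def by simp
  also have "\<dots> \<ge> sum f (A \<union> (\<lambda>j. n - j) ` A)"
    by (rule sum_mono2) (use A pos in auto)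
  hence "sum f {1..n-1} \<ge> sum f A + sum f ((\<lambda>j. n - j) ` A)"
    by (subst (asm) sum.union_disjoint) (use A in \<open>auto simp: A_def\<close>)
  also have "sum f ((\<lambda>j. n - j) ` A) = sum (\<lambda>j. f (n - j)) A"
    using A(4) by (simp add: sum.reindex)
  also have "\<dots> = sum f A" using assms by (intro sum.cong) (auto simp: A_def sym)
  finally have S2: "S_n n \<ge> 2 * sum f A" using \<open>S_n n = sum f {1..n-1}\<close> by simp
  have "sum f A \<ge> sum (\<lambda>j. real n / (pi * real j)) A"
    by (rule sum_mono) (use assms in \<open>auto simp: A_def intro!: low\<close>)
  moreover have "sum (\<lambda>j. real n / (pi * real j)) A = real n / pi * (25/12)"
    unfolding A_def by (simp add: eval_nat_numeral field_simps)
  ultimately have "S_n n \<ge> real n / pi * (25/6)" using S2 by simp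
  moreover have "real n / pi * (25/6) \<ge> 5/4 * real n"
  proof -
    have "pi \<le> 10/3" using pi_approx by simp
    hence "5/4 * pi \<le> 25/6" by simp
    hence "5/4 * pi * real n \<le> 25/6 * real n" using n0 by (intro mult_right_mono) auto
    thus ?thesis using pi_gt_zero by (simp add: field_simps)
  qed
  ultimately show ?thesis by linarith
qed

theorem lemma5p4:
  fixes n :: nat
  assumes "n \<ge> 2"
  shows "(\<forall>\<phi>\<in>{0..<pi/2}. W_fun n \<phi> = cos \<phi> * V_pot n \<phi>
            \<and> deriv (W_fun n) \<phi> / W_fun n \<phi> \<le> 0)
       \<and> (n \<ge> 10 \<longrightarrow>
            W_fun n (pi/2) = S_n n / 4
            \<and> (\<forall>\<phi>\<in>{pi/4..<pi/2}. \<bar>deriv (W_fun n) \<phi> / W_fun n \<phi>\<bar> \<le> 4/5))"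
proof -
  define A where "A x = (\<Sum>k=1..n. 1 / (sigma_k n k x)^3)" for x
  define B where "B x = (\<Sum>k=1..n. 1 / sigma_k n k x)" for x
  have Wd: "deriv (W_fun n) x = - (sin x / 4) * A x" for x unfolding A_def by (rule W_deriv)
  have Wf: "W_fun n x = S_n n / 4 + cos x / 4 * B x" for x unfolding W_fun_def B_def by simp
  have A0: "A x \<ge> 0" for x unfolding A_def
    by (rule sum_nonneg) (use sigma_pos in \<open>auto intro: less_imp_le\<close>)
  have Bn: "B x \<ge> real n" for x
  proof -
    have "(\<Sum>k=1..n. (1::real)) \<le> B x" unfolding B_def
    proof (rule sum_mono)
      fix k assume "k \<in> {1..n}"
      hence "sigma_k n k x > 0" "sigma_k n k x \<le> 1" using sigma_pos by auto
      thus "1 \<le> 1 / sigma_k n k x" by (simp add: le_divide_eq)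
    qed
    thus ?thesis by simp
  qed
  have part1: "\<forall>\<phi>\<in>{0..<pi/2}. W_fun n \<phi> = cos \<phi> * V_pot n \<phi>
            \<and> deriv (W_fun n) \<phi> / W_fun n \<phi> \<le> 0"
  proof
    fix x assume x: "x \<in> {0..<pi/2}"
    have c: "cos x > 0" using x by (intro cos_gt_zero_pi) auto
    have s: "sin x \<ge> 0" using x by (intro sin_ge_zero) auto
    have "W_fun n x = cos x * V_pot n x" unfolding W_fun_def V_pot_def using c
      by (simp add: field_simps)
    moreover have "W_fun n x \<ge> 0" unfolding Wf using S_nonneg[of n] c Bn[of x] assms
      by (intro add_nonneg_nonneg mult_nonneg_nonneg) auto
    moreover have "deriv (W_fun n) x \<le> 0" unfolding Wd using s A0[of x] by simp
    ultimately show "W_fun n x = cos x * V_pot n x \<and> deriv (W_fun n) x / W_fun n x \<le> 0"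
      by (simp add: divide_nonpos_nonneg)
  qed
  have part2: "\<forall>\<phi>\<in>{pi/4..<pi/2}. \<bar>deriv (W_fun n) \<phi> / W_fun n \<phi>\<bar> \<le> 4/5" if n10: "n \<ge> 10"
  proof
    fix x assume x: "x \<in> {pi/4..<pi/2}"
    define u where "u = cos x"
    define s where "s = sin x"
    have u0: "u > 0" unfolding u_def using x by (intro cos_gt_zero_pi) auto
    have s0: "s \<ge> 0" unfolding s_def using x by (intro sin_ge_zero) auto
    have su: "s\<^sup>2 = 1 - u\<^sup>2" unfolding s_def u_def by (simp add: sin_squared_eq)
    have "u \<le> cos (pi/4)" unfolding u_def using x by (intro cos_monotone_0_pi_le) auto
    hence "u\<^sup>2 \<le> (cos (pi/4))\<^sup>2" using u0 by (intro power_mono) auto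
    hence u2: "u\<^sup>2 \<le> 1/2" by (simp add: cos_45 power_divide)
    have Ab: "A x \<le> real n * (1 + 2 * u\<^sup>2)"
    proof -
      have "A x \<le> (\<Sum>k=1..n. 1 + 4 * ((c_k n k)\<^sup>2 * u\<^sup>2))" unfolding A_def
      proof (rule sum_mono)
        fix k assume k: "k \<in> {1..n}"
        have c1: "(c_k n k)\<^sup>2 < 1" using ck_sq_lt k by auto
        have t0: "0 \<le> (c_k n k)\<^sup>2 * u\<^sup>2" by simp
        have "(c_k n k)\<^sup>2 * u\<^sup>2 \<le> 1 * u\<^sup>2" using c1 by (intro mult_right_mono) auto
        hence t1: "(c_k n k)\<^sup>2 * u\<^sup>2 \<le> 1/2" using u2 by simp
        have r: "1 - (c_k n k)\<^sup>2 * u\<^sup>2 > 0" using t1 by simp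
        have "(sigma_k n k x)\<^sup>2 = 1 - (c_k n k)\<^sup>2 * u\<^sup>2"
          unfolding sigma_k_def u_def using r[unfolded u_def] by simp
        moreover have "sigma_k n k x \<ge> 0" using sigma_pos k by (auto intro: less_imp_le)
        ultimately show "1 / (sigma_k n k x)^3 \<le> 1 + 4 * ((c_k n k)\<^sup>2 * u\<^sup>2)"
          using cube_bound[OF t0 t1] by simp
      qed
      also have "\<dots> = real n + 4 * u\<^sup>2 * (\<Sum>k=1..n. (c_k n k)\<^sup>2)"
        by (simp add: sum.distrib sum_distrib_left sum_distrib_right algebra_simps)
      also have "\<dots> = real n * (1 + 2 * u\<^sup>2)" using sum_ck_sq[OF assms] by (simp add: algebra_simps)
      finally show ?thesis .
    qed
    have Sl: "S_n n \<ge> 5/4 * real n" using S_lower n10 by blast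
    have pb: "s * (1 + 2 * u\<^sup>2) \<le> 1 + 4/5 * u" using poly_bound u0 u2 s0 su by auto
    have Wpos: "W_fun n x > 0" unfolding Wf u_def[symmetric] using S_nonneg[of n] u0 Bn[of x] assms
      by (intro add_nonneg_pos) (auto intro!: mult_pos_pos)
    have "s * A x \<le> s * (real n * (1 + 2 * u\<^sup>2))" using Ab s0 by (intro mult_left_mono)
    also have "\<dots> = real n * (s * (1 + 2 * u\<^sup>2))" by simp
    also have "\<dots> \<le> real n * (1 + 4/5 * u)" using pb by (intro mult_left_mono) auto
    also have "\<dots> \<le> 4/5 * S_n n + 4/5 * u * B x"
    proof -
      have "u * real n \<le> u * B x" using Bn[of x] u0 by (intro mult_left_mono) auto
      thus ?thesis using Sl by (simp add: algebra_simps)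
    qed
    finally have key: "s * A x \<le> 4/5 * (4 * W_fun n x)" unfolding Wf u_def[symmetric]
      by (simp add: algebra_simps)
    have "\<bar>deriv (W_fun n) x / W_fun n x\<bar> = (s * A x / 4) / W_fun n x"
      unfolding Wd s_def[symmetric] using Wpos s0 A0[of x] by (simp add: abs_divide abs_mult)
    also have "\<dots> \<le> 4/5" using key Wpos by (simp add: divide_le_eq)
    finally show "\<bar>deriv (W_fun n) x / W_fun n x\<bar> \<le> 4/5" .
  qed
  have "W_fun n (pi/2) = S_n n / 4" by (simp add: W_fun_def)
  thus ?thesis using part1 part2 by blast
qed

end
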